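(* Let $F$ be a field of characteristic $0$, $d\ge1$, and let $\lambda,\mu$ be partitions with $\lambda\subset\mu$. (1) If $ST(\lambda)$ is a tensor polynomial identity for $M_d(F)$, then $ST(\mu)$ is a tensor polynomial identity for $M_d(F)$. (2) If $ST(\mu)$ is not a tensor polynomial identity for $M_d(F)$, then $ST(\lambda)$ is not a tensor polynomial identity for $M_d(F)$.
   Context: For partitions $\lambda,\mu$, $\lambda\subset\mu$ means $\lambda_i\le\mu_i$ for all $i$ (parts beyond the length taken as $0$), i.e. the Young diagram of $\lambda$ fits in that of $\mu$. For $\lambda=(h_1,\dots,h_n)\vdash k$, $ST(\lambda)(x_1,\dots,x_k):=\sum_{\tau\in S_k}\epsilon_\tau(X_1\otimes\cdots\otimes X_n)(x_{\tau(1)},\dots,x_{\tau(k)})\in F\langle X\rangle^{\otimes n}$ with $X_j:=x_{h_1+\dots+h_{j-1}+1}\cdots x_{h_1+\dots+h_j}$, $F\langle X\rangle$ the free associative algebra. A tensor polynomial identity (TPI) for $M_d(F)$ is a tensor polynomial vanishing under every evaluation $x_i\mapsto A_i\in M_d(F)$. *)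

theory Defs
  imports "HOL-Analysis.Finite_Cartesian_Product" "HOL-Combinatorics.Permutations"
begin

definition is_partition :: "nat list \<Rightarrow> bool" where
  "is_partition l \<longleftrightarrow> sorted_wrt (\<ge>) l \<and> (\<forall>x\<in>set l. 0 < x)"

definition part :: "nat list \<Rightarrow> nat \<Rightarrow> nat" where
  "part l i = (if i < length l then l ! i else 0)"

definition partition_le :: "nat list \<Rightarrow> nat list \<Rightarrow> bool" where
  "partition_le l m \<longleftrightarrow> (\<forall>i. part l i \<le> part m i)"

definition mat_prod_list :: "(('a::semiring_1)^('d::finite)^'d) list \<Rightarrow> 'a^'d^'d" where
  "mat_prod_list As = foldr (**) As (mat 1)"

text \<open>Value of the block X_j (0-based j) of ST(l) with variables x_i (0-based) substituted
  by A (tau i): X_j = x_s \<dots> x_(s+h_j-1), s = h_0 + ... + h_(j-1).\<close>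
definition ST_block :: "nat list \<Rightarrow> (nat \<Rightarrow> ('a::semiring_1)^('d::finite)^'d) \<Rightarrow> (nat \<Rightarrow> nat) \<Rightarrow> nat \<Rightarrow> 'a^'d^'d" where
  "ST_block l A tau j =
     mat_prod_list (map (\<lambda>i. A (tau i)) [sum_list (take j l)..<sum_list (take (Suc j) l)])"

text \<open>The evaluation of ST(l) at x_i \<mapsto> A i, as an element of M_d(F)^{\<otimes> n}, n = length l,
  identified with its coordinates w.r.t. the basis of tensors of matrix units:
  the coordinate at (p_0,q_0,...,p_(n-1),q_(n-1)) of M_0 \<otimes> ... \<otimes> M_(n-1) is
  \<Prod>j. M_j $ p_j $ q_j.\<close>
definition ST_eval :: "nat list \<Rightarrow> (nat \<Rightarrow> ('a::comm_ring_1)^('d::finite)^'d) \<Rightarrow> (nat \<Rightarrow> 'd \<times> 'd) \<Rightarrow> 'a" where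
  "ST_eval l A idx =
     (\<Sum>tau | tau permutes {..<sum_list l}.
        of_int (sign tau) * (\<Prod>j<length l. ST_block l A tau j $ fst (idx j) $ snd (idx j)))"

definition ST_is_TPI :: "nat list \<Rightarrow> ('a::comm_ring_1) itself \<Rightarrow> ('d::finite) itself \<Rightarrow> bool" where
  "ST_is_TPI l TYPE('a) TYPE('d) \<longleftrightarrow>
     (\<forall>(A :: nat \<Rightarrow> 'a^'d^'d) (idx :: nat \<Rightarrow> 'd \<times> 'd). ST_eval l A idx = 0)"

end

theory Submission
  imports Defs
begin


lemma mat_prod_list_snoc:
  "mat_prod_list (xs @ [x]) = mat_prod_list xs ** (x :: ('a::semiring_1)^('d::finite)^'d)"
  unfolding mat_prod_list_def
  by (induction xs) (simp_all add: matrix_mul_assoc)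

lemma ST_block_ge: "length l \<le> j \<Longrightarrow> ST_block l A tau j = mat 1"
  by (simp add: ST_block_def mat_prod_list_def)

lemma sum_take_mono: "j \<le> j' \<Longrightarrow> sum_list (take j l) \<le> sum_list (take j' (l::nat list))"
proof -
  assume "j \<le> j'"
  then have "take j' l = take j l @ take (j'-j) (drop j l)"
    by (metis le_add_diff_inverse take_add)
  then show ?thesis by simp
qed

lemma sum_take_le: "sum_list (take j l) \<le> sum_list (l::nat list)"
  by (metis append_take_drop_id le_add1 sum_list_append)

lemma sum_take_update:
  assumes "j0 < length l"
  shows "sum_list (take j (l[j0 := l!j0 + 1])) = sum_list (take j l) + (if j0 < j then 1 else (0::nat))"
proof (cases "j0 < j")
  case True
  then have "take j (l[j0 := l!j0 + 1]) = (take j l)[j0 := l!j0 + 1]"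
    by (simp add: take_update_swap)
  moreover have "j0 < length (take j l)" using True assms by simp
  ultimately show ?thesis using True
    by (simp add: sum_list_update)
next
  case False
  then show ?thesis by simp
qed



definition gam :: "nat \<Rightarrow> nat \<Rightarrow> nat \<Rightarrow> nat" where
  "gam N p i = (if i < p then i else if i < N then Suc i else if i = N then p else i)"

definition del :: "nat \<Rightarrow> nat \<Rightarrow> nat \<Rightarrow> nat" where
  "del N p i = (if i < p then i else if i = p then N else if i \<le> N then i - 1 else i)"

lemma block_shift:
  fixes l :: "nat list" and A B :: "nat \<Rightarrow> ('a::semiring_1)^('d::finite)^'d"
  assumes j0: "j0 < length l"
    and hA: "\<And>k. k < sum_list l \<Longrightarrow> A (tau' (gam (sum_list l) (sum_list (take (Suc j0) l)) k)) = B (sigma k)"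
    and hp: "A (tau' (sum_list (take (Suc j0) l))) = C"
  shows "j \<noteq> j0 \<Longrightarrow> ST_block (l[j0 := l!j0 + 1]) A tau' j = ST_block l B sigma j"
    and "ST_block (l[j0 := l!j0 + 1]) A tau' j0 = ST_block l B sigma j0 ** C"
proof -
  define N where "N = sum_list l"
  define p where "p = sum_list (take (Suc j0) l)"
  have pN: "p \<le> N" unfolding p_def N_def by (rule sum_take_le)
  note st = sum_take_update[OF j0]
  show "ST_block (l[j0 := l!j0 + 1]) A tau' j = ST_block l B sigma j" if jne: "j \<noteq> j0"
  proof (cases "length l \<le> j")
    case True
    then show ?thesis by (simp add: ST_block_ge)
  next
    case False
    show ?thesis
    proof (cases "j < j0")
      case True
      have bj: "sum_list (take (Suc j) l) \<le> p" unfolding p_def using True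
        by (intro sum_take_mono) simp
      have "map (\<lambda>i. A (tau' i)) [sum_list (take j l)..<sum_list (take (Suc j) l)]
          = map (\<lambda>i. B (sigma i)) [sum_list (take j l)..<sum_list (take (Suc j) l)]"
      proof (rule map_cong[OF refl])
        fix i assume "i \<in> set [sum_list (take j l)..<sum_list (take (Suc j) l)]"
        then have "i < p" using bj by simp
        then have "gam N p i = i" "i < N" using pN by (auto simp: gam_def)
        then show "A (tau' i) = B (sigma i)" using hA[of i] unfolding N_def p_def by simp
      qed
      then show ?thesis using True st[of j] st[of "Suc j"] by (simp add: ST_block_def del: map_eq_conv)
    next
      case False
      then have jg: "j0 < j" using jne by simp
      have aj: "p \<le> sum_list (take j l)" unfolding p_def using jg
        by (intro sum_take_mono) simp
      have bj: "sum_list (take (Suc j) l) \<le> N" unfolding N_def by (rule sum_take_le)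
      have "map (\<lambda>i. A (tau' i)) [Suc (sum_list (take j l))..<Suc (sum_list (take (Suc j) l))]
          = map (\<lambda>i. A (tau' (Suc i))) [sum_list (take j l)..<sum_list (take (Suc j) l)]"
        unfolding map_Suc_upt[symmetric] map_map comp_def by (rule refl)
      also have "\<dots> = map (\<lambda>i. B (sigma i)) [sum_list (take j l)..<sum_list (take (Suc j) l)]"
      proof (rule map_cong[OF refl])
        fix i assume "i \<in> set [sum_list (take j l)..<sum_list (take (Suc j) l)]"
        then have "p \<le> i" "i < N" using aj bj by auto
        then have "gam N p i = Suc i" by (auto simp: gam_def)
        then show "A (tau' (Suc i)) = B (sigma i)" using hA[of i] \<open>i < N\<close> unfolding N_def p_def by simp
      qed
      finally show ?thesis using jg st[of j] st[of "Suc j"] by (simp add: ST_block_def del: map_eq_conv)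
    qed
  qed
  show "ST_block (l[j0 := l!j0 + 1]) A tau' j0 = ST_block l B sigma j0 ** C"
  proof -
    have aj: "sum_list (take j0 l) \<le> p" unfolding p_def by (intro sum_take_mono) simp
    have "[sum_list (take j0 l)..<Suc p] = [sum_list (take j0 l)..<p] @ [p]"
      using aj by simp
    moreover have "map (\<lambda>i. A (tau' i)) [sum_list (take j0 l)..<p]
          = map (\<lambda>i. B (sigma i)) [sum_list (take j0 l)..<p]"
      proof (rule map_cong[OF refl])
        fix i assume "i \<in> set [sum_list (take j0 l)..<p]"
        then have "i < p" by simp
        then have "gam N p i = i" "i < N" using pN by (auto simp: gam_def)
        then show "A (tau' i) = B (sigma i)" using hA[of i] unfolding N_def p_def by simp
      qed
    ultimately show ?thesis using st[of j0] st[of "Suc j0"] hp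
      by (simp add: ST_block_def mat_prod_list_snoc p_def del: map_eq_conv)
  qed
qed



lemma gam_del: "p \<le> N \<Longrightarrow> gam N p (del N p i) = i"
  by (auto simp: gam_def del_def)
lemma del_gam: "p \<le> N \<Longrightarrow> del N p (gam N p i) = i"
  by (auto simp: gam_def del_def)

lemma gam_iff: "p \<le> N \<Longrightarrow> gam N p x = y \<longleftrightarrow> x = del N p y"
  by (metis gam_del del_gam)
lemma del_iff: "p \<le> N \<Longrightarrow> del N p x = y \<longleftrightarrow> x = gam N p y"
  by (metis gam_del del_gam)
lemma gam_permutes: "p \<le> N \<Longrightarrow> gam N p permutes {..<Suc N}"
  unfolding permutes_def
  apply (intro conjI allI impI)
   apply (simp add: gam_def)
  apply (simp add: gam_iff)
  done
lemma del_permutes: "p \<le> N \<Longrightarrow> del N p permutes {..<Suc N}"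
  unfolding permutes_def
  apply (intro conjI allI impI)
   apply (simp add: del_def)
  apply (simp add: del_iff)
  done

lemma fix_permutes:
  assumes "tau permutes {..<Suc N}" "tau N = N"
  shows "tau permutes {..<N}"
proof -
  have "tau x = x" if "x \<notin> {..<N}" for x
  proof (cases "x = N")
    case False
    then have "x \<notin> {..<Suc N}" using that by auto
    then show ?thesis using assms(1) by (simp add: permutes_not_in)
  qed (use assms(2) in simp)
  then show ?thesis using assms(1) unfolding permutes_def by blast
qed

lemma bij_reindex:
  assumes "p \<le> N" "m \<le> N"
  shows "bij_betw (\<lambda>sigma. gam N m \<circ> sigma \<circ> del N p) {sigma. sigma permutes {..<N}}
           {tau. tau permutes {..<Suc N} \<and> tau p = m}"
proof (rule bij_betwI[where g = "\<lambda>tau. del N m \<circ> tau \<circ> gam N p"])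
  have "gam N m \<circ> sigma \<circ> del N p permutes {..<Suc N} \<and> (gam N m \<circ> sigma \<circ> del N p) p = m"
    if s: "sigma permutes {..<N}" for sigma
  proof
    have s': "sigma permutes {..<Suc N}" by (rule permutes_subset[OF s]) auto
    show "gam N m \<circ> sigma \<circ> del N p permutes {..<Suc N}"
      by (rule permutes_compose[OF del_permutes[OF assms(1)] permutes_compose[OF s' gam_permutes[OF assms(2)]]])
    have "sigma N = N" by (rule permutes_not_in[OF s]) simp
    moreover have "del N p p = N" by (simp add: del_def)
    moreover have "gam N m N = m" using assms by (simp add: gam_def)
    ultimately show "(gam N m \<circ> sigma \<circ> del N p) p = m" by simp
  qed
  then show "(\<lambda>sigma. gam N m \<circ> sigma \<circ> del N p) \<in> {sigma. sigma permutes {..<N}} \<rightarrow>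
    {tau. tau permutes {..<Suc N} \<and> tau p = m}" by blast
  have "del N m \<circ> tau \<circ> gam N p permutes {..<N}"
    if t: "tau permutes {..<Suc N}" "tau p = m" for tau
  proof -
    have "gam N p N = p" using assms by (simp add: gam_def)
    moreover have "del N m m = N" by (simp add: del_def)
    ultimately have "(del N m \<circ> tau \<circ> gam N p) N = N" using t by simp
    moreover have "del N m \<circ> tau \<circ> gam N p permutes {..<Suc N}"
      by (rule permutes_compose[OF gam_permutes[OF assms(1)] permutes_compose[OF t(1) del_permutes[OF assms(2)]]])
    ultimately show ?thesis by (simp add: fix_permutes)
  qed
  then show "(\<lambda>tau. del N m \<circ> tau \<circ> gam N p) \<in> {tau. tau permutes {..<Suc N} \<and> tau p = m} \<rightarrow>
    {sigma. sigma permutes {..<N}}" by blast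
  show "del N m \<circ> (gam N m \<circ> sigma \<circ> del N p) \<circ> gam N p = sigma" for sigma
    using assms by (simp add: fun_eq_iff del_gam gam_del)
  show "gam N m \<circ> (del N m \<circ> tau \<circ> gam N p) \<circ> del N p = tau" for tau
    using assms by (simp add: fun_eq_iff del_gam gam_del)
qed



definition E :: "nat \<Rightarrow> nat list \<Rightarrow> (nat \<Rightarrow> ('a::comm_ring_1)^('d::finite)^'d) \<Rightarrow> (nat \<Rightarrow> 'd \<times> 'd) \<Rightarrow> 'a" where
  "E n l A idx = (\<Sum>tau | tau permutes {..<sum_list l}.
        of_int (sign tau) * (\<Prod>j<n. ST_block l A tau j $ fst (idx j) $ snd (idx j)))"

lemma prod_split:
  fixes A :: "nat \<Rightarrow> ('a::comm_ring_1)^('d::finite)^'d"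
  assumes j0: "j0 < length l" "j0 < n"
    and hA: "\<And>k. k < sum_list l \<Longrightarrow> A (tau' (gam (sum_list l) (sum_list (take (Suc j0) l)) k)) = B (sigma k)"
    and hp: "A (tau' (sum_list (take (Suc j0) l))) = C"
  shows "(\<Prod>j<n. ST_block (l[j0 := l!j0 + 1]) A tau' j $ fst (idx j) $ snd (idx j))
    = (\<Sum>r\<in>UNIV. C $ r $ snd (idx j0) * (\<Prod>j<n. ST_block l B sigma j $ fst ((idx(j0 := (fst (idx j0), r))) j) $ snd ((idx(j0 := (fst (idx j0), r))) j)))"
proof -
  have bs1: "ST_block (l[j0 := l!j0 + 1]) A tau' j = ST_block l B sigma j" if "j \<noteq> j0" for j
    by (rule block_shift(1)[OF j0(1)]) (rule hA, assumption, rule hp, rule that)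
  have bs2: "ST_block (l[j0 := l!j0 + 1]) A tau' j0 = ST_block l B sigma j0 ** C"
    by (rule block_shift(2)[OF j0(1)]) (rule hA, assumption, rule hp)
  define R where "R = (\<Prod>j\<in>{..<n}-{j0}. ST_block l B sigma j $ fst (idx j) $ snd (idx j))"
  have "(\<Prod>j<n. ST_block (l[j0 := l!j0 + 1]) A tau' j $ fst (idx j) $ snd (idx j))
     = ST_block (l[j0 := l!j0 + 1]) A tau' j0 $ fst (idx j0) $ snd (idx j0) *
       (\<Prod>j\<in>{..<n}-{j0}. ST_block (l[j0 := l!j0 + 1]) A tau' j $ fst (idx j) $ snd (idx j))"
    using j0 by (intro prod.remove) auto
  also have "(\<Prod>j\<in>{..<n}-{j0}. ST_block (l[j0 := l!j0 + 1]) A tau' j $ fst (idx j) $ snd (idx j)) = R"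
    unfolding R_def by (intro prod.cong refl) (subst bs1, auto)
  also have "ST_block (l[j0 := l!j0 + 1]) A tau' j0 $ fst (idx j0) $ snd (idx j0)
     = (\<Sum>r\<in>UNIV. ST_block l B sigma j0 $ fst (idx j0) $ r * C $ r $ snd (idx j0))"
    by (subst bs2) (simp add: matrix_matrix_mult_def)
  finally have 1: "(\<Prod>j<n. ST_block (l[j0 := l!j0 + 1]) A tau' j $ fst (idx j) $ snd (idx j))
     = (\<Sum>r\<in>UNIV. ST_block l B sigma j0 $ fst (idx j0) $ r * C $ r $ snd (idx j0)) * R" .
  have 2: "(\<Prod>j<n. ST_block l B sigma j $ fst ((idx(j0 := (fst (idx j0), r))) j) $ snd ((idx(j0 := (fst (idx j0), r))) j))
     = ST_block l B sigma j0 $ fst (idx j0) $ r * R" for r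
  proof -
    have "(\<Prod>j<n. ST_block l B sigma j $ fst ((idx(j0 := (fst (idx j0), r))) j) $ snd ((idx(j0 := (fst (idx j0), r))) j))
      = ST_block l B sigma j0 $ fst ((idx(j0 := (fst (idx j0), r))) j0) $ snd ((idx(j0 := (fst (idx j0), r))) j0) *
        (\<Prod>j\<in>{..<n}-{j0}. ST_block l B sigma j $ fst ((idx(j0 := (fst (idx j0), r))) j) $ snd ((idx(j0 := (fst (idx j0), r))) j))"
      using j0 by (intro prod.remove) auto
    also have "(\<Prod>j\<in>{..<n}-{j0}. ST_block l B sigma j $ fst ((idx(j0 := (fst (idx j0), r))) j) $ snd ((idx(j0 := (fst (idx j0), r))) j)) = R"
      unfolding R_def by (intro prod.cong refl) simp
    finally show ?thesis by simp
  qed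
  show ?thesis unfolding 1 2 by (simp add: sum_distrib_right sum_distrib_left mult_ac)
qed


lemma E_step:
  fixes A :: "nat \<Rightarrow> ('a::comm_ring_1)^('d::finite)^'d"
  assumes j0: "j0 < length l" "j0 < n"
    and Z: "\<And>(B :: nat \<Rightarrow> 'a^'d^'d) idx. E n l B idx = 0"
  shows "E n (l[j0 := l!j0 + 1]) A idx = 0"
proof -
  define N where "N = sum_list l"
  define p where "p = sum_list (take (Suc j0) l)"
  have pN: "p \<le> N" unfolding p_def N_def by (rule sum_take_le)
  have sl: "sum_list (l[j0 := l!j0 + 1]) = Suc N"
    using sum_take_update[OF j0(1), of "length l"] j0 unfolding N_def by simp
  define f where "f tau = of_int (sign tau) *
      (\<Prod>j<n. ST_block (l[j0 := l!j0 + 1]) A tau j $ fst (idx j) $ snd (idx j))" for tau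
  have "E n (l[j0 := l!j0 + 1]) A idx = sum f {tau. tau permutes {..<Suc N}}"
    unfolding E_def f_def sl by simp
  also have "\<dots> = (\<Sum>m\<in>{..<Suc N}. sum f {tau \<in> {tau. tau permutes {..<Suc N}}. tau p = m})"
  proof (rule sum.group[symmetric])
    show "(\<lambda>tau. tau p) ` {tau. tau permutes {..<Suc N}} \<subseteq> {..<Suc N}"
    proof
      fix x assume "x \<in> (\<lambda>tau. tau p) ` {tau. tau permutes {..<Suc N}}"
      then obtain tau where t: "tau permutes {..<Suc N}" "x = tau p" by auto
      show "x \<in> {..<Suc N}" using permutes_in_image[OF t(1), of p] pN t(2) by simp
    qed
  qed (auto simp: finite_permutations)
  also have "\<dots> = 0"
  proof (rule sum.neutral, rule ballI)
    fix m assume "m \<in> {..<Suc N}"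
    then have mN: "m \<le> N" by simp
    have "sum f {tau \<in> {tau. tau permutes {..<Suc N}}. tau p = m}
        = sum f {tau. tau permutes {..<Suc N} \<and> tau p = m}" by simp
    also have "\<dots> = (\<Sum>sigma\<in>{sigma. sigma permutes {..<N}}. f (gam N m \<circ> sigma \<circ> del N p))"
      by (rule sum.reindex_bij_betw[OF bij_reindex[OF pN mN], symmetric])
    also have "\<dots> = 0"
    proof -
      define B where "B = A \<circ> gam N m"
      define c where "c = (of_int (sign (gam N m) * sign (del N p)) :: 'a)"
      define idx' where "idx' r = idx(j0 := (fst (idx j0), r))" for r
      have eq: "f (gam N m \<circ> sigma \<circ> del N p) = c * (\<Sum>r\<in>UNIV. A m $ r $ snd (idx j0) *
          (of_int (sign sigma) * (\<Prod>j<n. ST_block l B sigma j $ fst (idx' r j) $ snd (idx' r j))))"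
        if s: "sigma permutes {..<N}" for sigma
      proof -
        let ?tau = "gam N m \<circ> sigma \<circ> del N p"
        have s': "sigma permutes {..<Suc N}" by (rule permutes_subset[OF s]) auto
        have sN: "sigma N = N" by (rule permutes_not_in[OF s]) simp
        have hA: "A (?tau (gam (sum_list l) (sum_list (take (Suc j0) l)) k)) = B (sigma k)"
          if "k < sum_list l" for k
          unfolding N_def[symmetric] p_def[symmetric] B_def using pN by (simp add: del_gam)
        have hp: "A (?tau (sum_list (take (Suc j0) l))) = A m"
          unfolding p_def[symmetric] using sN mN by (simp add: del_def gam_def)
        have pg: "permutation (gam N m)" "permutation (del N p)" "permutation sigma"
          using gam_permutes[OF mN] del_permutes[OF pN] s
          by (auto intro: permutes_imp_permutation)
        have sg: "sign ?tau = sign (gam N m) * sign sigma * sign (del N p)"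
          using pg by (simp add: sign_compose permutation_compose)
        have pe: "(\<Prod>j<n. ST_block (l[j0 := l!j0 + 1]) A ?tau j $ fst (idx j) $ snd (idx j))
          = (\<Sum>r\<in>UNIV. A m $ r $ snd (idx j0) * (\<Prod>j<n. ST_block l B sigma j $ fst (idx' r j) $ snd (idx' r j)))"
          unfolding idx'_def by (rule prod_split[OF j0]) (rule hA, assumption, rule hp)
        show ?thesis
          unfolding f_def pe sg c_def
          by (simp add: sum_distrib_left mult_ac)
      qed
      have "(\<Sum>sigma\<in>{sigma. sigma permutes {..<N}}. f (gam N m \<circ> sigma \<circ> del N p))
          = c * (\<Sum>r\<in>UNIV. A m $ r $ snd (idx j0) * E n l B (idx' r))"
        unfolding E_def N_def[symmetric]
        by (simp add: eq sum_distrib_left sum_distrib_right mult_ac sum.swap[where A = "{sigma. sigma permutes {..<N}}"])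
      also have "\<dots> = 0" by (simp add: Z)
      finally show ?thesis .
    qed
    finally show "sum f {tau \<in> {tau. tau permutes {..<Suc N}}. tau p = m} = 0" .
  qed
  finally show ?thesis .
qed



lemma ST_eval_E: "ST_eval l A idx = E (length l) l A idx"
  by (simp add: ST_eval_def E_def)

lemma E_pad:
  assumes "length l \<le> n"
  shows "E n l A idx = (\<Prod>j\<in>{length l..<n}. (mat 1 :: ('a::comm_ring_1)^('d::finite)^'d) $ fst (idx j) $ snd (idx j)) * E (length l) l A idx"
proof -
  have "(\<Prod>j<n. ST_block l A tau j $ fst (idx j) $ snd (idx j)) =
     (\<Prod>j<length l. ST_block l A tau j $ fst (idx j) $ snd (idx j)) *
     (\<Prod>j\<in>{length l..<n}. (mat 1 :: 'a^'d^'d) $ fst (idx j) $ snd (idx j))" for tau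
  proof -
    have "{..<n} = {..<length l} \<union> {length l..<n}" using assms by auto
    then have "(\<Prod>j<n. ST_block l A tau j $ fst (idx j) $ snd (idx j)) =
     (\<Prod>j<length l. ST_block l A tau j $ fst (idx j) $ snd (idx j)) *
     (\<Prod>j\<in>{length l..<n}. ST_block l A tau j $ fst (idx j) $ snd (idx j))"
      by (simp add: prod.union_disjoint ivl_disj_int)
    also have "(\<Prod>j\<in>{length l..<n}. ST_block l A tau j $ fst (idx j) $ snd (idx j)) =
       (\<Prod>j\<in>{length l..<n}. (mat 1 :: 'a^'d^'d) $ fst (idx j) $ snd (idx j))"
      by (intro prod.cong refl) (simp add: ST_block_ge)
    finally show ?thesis .
  qed
  then show ?thesis unfolding E_def by (simp add: sum_distrib_left sum_distrib_right mult_ac)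
qed

lemma E_append0: "E n (l @ replicate k 0) A idx = E n l A idx"
proof -
  have "ST_block (l @ replicate k 0) A tau j = ST_block l A tau j" for tau j
    unfolding ST_block_def by (simp add: sum_list_replicate)
  then show ?thesis unfolding E_def by (simp add: sum_list_replicate)
qed

lemma sum_list_le_pointwise:
  assumes "length l = length (m::nat list)" "\<forall>i<length l. l!i \<le> m!i"
  shows "sum_list l \<le> sum_list m"
  using assms by (auto simp: sum_list_sum_nth intro!: sum_mono)

lemma E_mono:
  fixes A :: "nat \<Rightarrow> ('a::comm_ring_1)^('d::finite)^'d"
  assumes "length l = n" "length m = n" "\<forall>i<n. l!i \<le> m!i"
    and "\<And>(B :: nat \<Rightarrow> 'a^'d^'d) idx. E n l B idx = 0"
  shows "E n m A idx = 0"
  using assms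
proof (induction "sum_list m - sum_list l" arbitrary: l rule: less_induct)
  case less
  show ?case
  proof (cases "l = m")
    case True
    then show ?thesis using less.prems by simp
  next
    case False
    then obtain i where i: "i < n" "l!i \<noteq> m!i"
      using less.prems(1,2) nth_equalityI by metis
    then have lt: "l!i < m!i" using less.prems(3) by (simp add: order_less_le)
    define l' where "l' = l[i := l!i + 1]"
    have len: "length l' = n" using less.prems(1) by (simp add: l'_def)
    have le': "\<forall>k<n. l'!k \<le> m!k" using less.prems(1,3) lt i(1) by (auto simp: l'_def nth_list_update)
    have Z': "E n l' B idx = 0" for B :: "nat \<Rightarrow> 'a^'d^'d" and idx
      unfolding l'_def by (rule E_step) (use i less.prems in auto)
    have s': "sum_list l' = Suc (sum_list l)"
      using sum_take_update[of i l "length l"] i less.prems(1) by (simp add: l'_def)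
    have "sum_list l' \<le> sum_list m" using len le' less.prems(2)
      by (intro sum_list_le_pointwise) auto
    then have "sum_list m - sum_list l' < sum_list m - sum_list l" using s' by simp
    from less.hyps[OF this len less.prems(2) le' Z'] show ?thesis .
  qed
qed

theorem mainTheorem10:
  fixes lam mu :: "nat list"
  assumes "is_partition lam" and "is_partition mu" and "partition_le lam mu"
  shows "(ST_is_TPI lam TYPE('a::field_char_0) TYPE('d::finite)
            \<longrightarrow> ST_is_TPI mu TYPE('a) TYPE('d))
       \<and> (\<not> ST_is_TPI mu TYPE('a) TYPE('d) \<longrightarrow> \<not> ST_is_TPI lam TYPE('a) TYPE('d))"
proof -
  have len: "length lam \<le> length mu"
  proof (rule ccontr)
    assume "\<not> ?thesis"
    then have "length mu < length lam" by simp
    then have "0 < lam ! length mu" using assms(1) unfolding is_partition_def by auto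
    moreover have "part lam (length mu) \<le> part mu (length mu)"
      using assms(3) unfolding partition_le_def by blast
    ultimately show False using \<open>length mu < length lam\<close> by (simp add: part_def)
  qed
  have main: "ST_is_TPI mu TYPE('a) TYPE('d)" if T: "ST_is_TPI lam TYPE('a::field_char_0) TYPE('d::finite)"
  proof -
    define n where "n = length mu"
    define L where "L = lam @ replicate (n - length lam) 0"
    have lenL: "length L = n" using len by (simp add: L_def n_def)
    have le: "\<forall>i<n. L!i \<le> mu!i"
    proof (intro allI impI)
      fix i assume "i < n"
      have "part lam i \<le> part mu i" using assms(3) unfolding partition_le_def by blast
      then show "L!i \<le> mu!i" using \<open>i < n\<close> unfolding part_def L_def n_def
        by (auto simp: nth_append)
    qed
    have ZL: "E n L B idx = 0" for B :: "nat \<Rightarrow> 'a^'d^'d" and idx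
    proof -
      have "E (length lam) lam B idx = 0"
        using T unfolding ST_is_TPI_def by (simp add: ST_eval_E)
      then show ?thesis unfolding L_def E_append0 using E_pad[of lam n B idx] len n_def by simp
    qed
    have "E n mu A idx = 0" for A :: "nat \<Rightarrow> 'a^'d^'d" and idx
      by (rule E_mono[OF lenL _ le ZL]) (simp add: n_def)
    then show ?thesis unfolding ST_is_TPI_def by (simp add: ST_eval_E n_def)
  qed
  then show ?thesis by blast
qed

end
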